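(* Let $\gamma\in(0,2/f_{\max})$. The map $\mathcal T:\mathbb S^{N\times N}\to\mathbb S^{N\times N}$, $\mathcal T(\tilde h)=\mathcal P\big(\gamma\tilde X_R+\tilde h-\gamma(\mathcal F(\tilde h)-\tfrac12)\big)$, is a contraction on the set of real matrices in $\mathbb S^{N\times N}$ with respect to the Frobenius distance.
   Context: $M,N$ positive integers with $N>2M$; $g$ is a real $M\times M$ image with values in $[0,255]$ zero-padded to $N\times N$, $\tilde g=\tilde g_R+j\tilde g_I$ its $N\times N$ 2D-DFT $\mathfrak F(g)$, and $\tilde X_R=\mathbb 1(\tilde g_R+W_R+d_R>0)-\tfrac12$ entrywise, where $W_R$ is independent zero-mean noise of known distribution symmetric about $0$ and $d_R$ independent AWGN dither, ensuring the total noise density is positive on the signal range. $\mathcal F$ is the CDF and $f$ the PDF of the total noise, applied entrywise; $f_{\max}$ is the maximum of $f$ over the region within the bounds of the signal. $\mathbb S=[-255N^2,255N^2]$. $\mathcal P(\tilde h)=\mathfrak F(\textsc{Clip}(\textsc{Proj}(\mathfrak F^{-1}(\tilde h))))$, where $\textsc{Proj}$ zeroes spatial-domain pixels outside the support region (the $2M^2$ pixels of the image block and its reflection $(n_1,n_2)\mapsto(-n_1\bmod N,-n_2\bmod N)$) and $\textsc{Clip}$ clips entries to $[0,255]$. *)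

theory Defs
  imports "HOL-Probability.Probability"
begin

type_synonym cmat = "nat \<times> nat \<Rightarrow> complex"
type_synonym rmat = "nat \<times> nat \<Rightarrow> real"

text \<open>Unnormalised N x N 2D DFT and its inverse (indices 0..N-1; entries outside are irrelevant).\<close>
definition dft2 :: "nat \<Rightarrow> cmat \<Rightarrow> cmat" where
  "dft2 N x = (\<lambda>(k1, k2). \<Sum>n1<N. \<Sum>n2<N.
      x (n1, n2) * cis (- 2 * pi * real (k1 * n1 + k2 * n2) / real N))"

definition idft2 :: "nat \<Rightarrow> cmat \<Rightarrow> cmat" where
  "idft2 N y = (\<lambda>(n1, n2). (1 / of_nat (N^2)) * (\<Sum>k1<N. \<Sum>k2<N.
      y (k1, k2) * cis (2 * pi * real (k1 * n1 + k2 * n2) / real N)))"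

definition support_region :: "nat \<Rightarrow> nat \<Rightarrow> (nat \<times> nat) set" where
  "support_region N M = {(n1, n2). n1 < M \<and> n2 < M}
     \<union> {((N - n1) mod N, (N - n2) mod N) | n1 n2. n1 < M \<and> n2 < M}"

definition proj_supp :: "nat \<Rightarrow> nat \<Rightarrow> cmat \<Rightarrow> cmat" where
  "proj_supp N M x = (\<lambda>p. if p \<in> support_region N M then x p else 0)"

text \<open>Entrywise clipping to [0,255] (nearest point of the segment [0,255] in the complex plane).\<close>
definition clip255 :: "complex \<Rightarrow> complex" where
  "clip255 z = complex_of_real (max 0 (min 255 (Re z)))"

definition P_op :: "nat \<Rightarrow> nat \<Rightarrow> cmat \<Rightarrow> cmat" where
  "P_op N M h = dft2 N (\<lambda>p. clip255 (proj_supp N M (idft2 N h) p))"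

definition zero_pad :: "nat \<Rightarrow> rmat \<Rightarrow> cmat" where
  "zero_pad M g = (\<lambda>(n1, n2). if n1 < M \<and> n2 < M then complex_of_real (g (n1, n2)) else 0)"

text \<open>1-bit measurements of the real part of the DFT (for realisations W, d of the noises).\<close>
definition Xr :: "nat \<Rightarrow> nat \<Rightarrow> rmat \<Rightarrow> rmat \<Rightarrow> rmat \<Rightarrow> rmat" where
  "Xr N M g W d = (\<lambda>p. (if Re (dft2 N (zero_pad M g) p) + W p + d p > 0 then 1 else 0) - 1/2)"

definition noise_cdf :: "real measure \<Rightarrow> real \<Rightarrow> real \<Rightarrow> real" where
  "noise_cdf \<mu> \<sigma> x = measure (distr (\<mu> \<Otimes>\<^sub>M density lborel (normal_density 0 \<sigma>)) borel
      (\<lambda>(w, e). w + e)) {..x}"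

definition noise_pdf :: "real measure \<Rightarrow> real \<Rightarrow> real \<Rightarrow> real" where
  "noise_pdf \<mu> \<sigma> x = (\<integral>w. normal_density 0 \<sigma> (x - w) \<partial>\<mu>)"

definition sig_range :: "nat \<Rightarrow> real set" where
  "sig_range N = {- 255 * real (N^2) .. 255 * real (N^2)}"

definition f_max :: "real measure \<Rightarrow> real \<Rightarrow> nat \<Rightarrow> real" where
  "f_max \<mu> \<sigma> N = (SUP x\<in>sig_range N. noise_pdf \<mu> \<sigma> x)"

definition T_op :: "nat \<Rightarrow> nat \<Rightarrow> real measure \<Rightarrow> real \<Rightarrow> real \<Rightarrow> rmat \<Rightarrow> cmat \<Rightarrow> cmat" where
  "T_op N M \<mu> \<sigma> \<gamma> X h = P_op N M (\<lambda>p. complex_of_real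
      (\<gamma> * X p + Re (h p) - \<gamma> * (noise_cdf \<mu> \<sigma> (Re (h p)) - 1/2)))"

definition real_S_mats :: "nat \<Rightarrow> cmat set" where
  "real_S_mats N = {h. \<forall>i<N. \<forall>j<N. Im (h (i, j)) = 0 \<and> Re (h (i, j)) \<in> sig_range N}"

definition frob_dist :: "nat \<Rightarrow> cmat \<Rightarrow> cmat \<Rightarrow> real" where
  "frob_dist N A B = sqrt (\<Sum>i<N. \<Sum>j<N. (cmod (A (i, j) - B (i, j)))^2)"

definition is_contraction_on :: "nat \<Rightarrow> cmat set \<Rightarrow> (cmat \<Rightarrow> cmat) \<Rightarrow> bool" where
  "is_contraction_on N D T \<longleftrightarrow> T ` D \<subseteq> D \<and>
     (\<exists>L. 0 \<le> L \<and> L < 1 \<and> (\<forall>a\<in>D. \<forall>b\<in>D. frob_dist N (T a) (T b) \<le> L * frob_dist N a b))"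

end

theory Submission
  imports Defs
begin


lemma cis_period:
  fixes a b q :: int
  assumes "N > 0" "a = b + int N * q"
  shows "cis (2 * pi * of_int a / real N) = cis (2 * pi * of_int b / real N)"
proof -
  have "2 * pi * of_int a / real N = 2 * pi * of_int b / real N + 2 * pi * of_int q"
    using assms by (simp add: field_simps)
  moreover have "cis (2 * pi * of_int q) = 1" by (rule cis_multiple_2pi) simp
  ultimately show ?thesis by (simp add: cis_mult[symmetric])
qed

lemma ortho0:
  fixes d :: int
  assumes "N > 0" "\<bar>d\<bar> < int N" "d \<noteq> 0"
  shows "(\<Sum>k<N. cis (2 * pi * real k * of_int d / real N)) = 0"
proof -
  define z where "z = cis (2 * pi * of_int d / real N)"
  have pw: "z ^ k = cis (2 * pi * real k * of_int d / real N)" for k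
    unfolding z_def Complex.DeMoivre by (rule arg_cong[where f=cis]) (simp only: times_divide_eq_right mult_ac)
  have "z \<noteq> 1"
  proof
    assume "z = 1"
    then have "exp (\<i> * complex_of_real (2 * pi * of_int d / real N)) = 1"
      unfolding z_def cis_conv_exp by simp
    then obtain n :: int where n: "2 * pi * of_int d / real N = of_int (2 * n) * pi"
      unfolding exp_eq_1 by auto
    have "2 * pi * of_int d = (2 * pi * of_int d / real N) * real N" using assms(1) by simp
    also have "\<dots> = 2 * pi * (real N * of_int n)" unfolding n by simp
    finally have "of_int d = real N * of_int n" by simp
    then have e: "d = int N * n"
      by (metis of_int_eq_iff of_int_mult of_int_of_nat_eq)
    show False
    proof (cases "n = 0")
      case True then show False using e assms(3) by simp
    next
      case nz: False
      have "\<bar>int N * n\<bar> \<ge> int N" using nz assms(1) by (simp add: abs_mult)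
      then show False using e assms(2) by simp
    qed
  qed
  have zN: "z ^ N = 1"
  proof -
    have "z ^ N = cis (2 * pi * real N * of_int d / real N)" by (rule pw)
    also have "2 * pi * real N * of_int d / real N = 2 * pi * of_int d" using assms(1) by simp
    also have "cis (2 * pi * of_int d) = 1" by (rule cis_multiple_2pi) simp
    finally show ?thesis .
  qed
  have "(\<Sum>k<N. cis (2 * pi * real k * of_int d / real N)) = (\<Sum>k<N. z ^ k)" by (simp add: pw)
  also have "\<dots> = 0" using geometric_sum[OF \<open>z \<noteq> 1\<close>] zN by simp
  finally show ?thesis .
qed

lemma ortho_e:
  fixes e :: int
  assumes "N > 0" "e = 1 \<or> e = -1" "n < N" "m < N"
  shows "(\<Sum>k<N. cis (of_int e * 2 * pi * real k * of_int (int n - int m) / real N))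
     = (if n = m then of_nat N else 0)"
proof (cases "n = m")
  case True then show ?thesis by simp
next
  case False
  define d where "d = e * (int n - int m)"
  have "\<bar>d\<bar> < int N" "d \<noteq> 0" using assms False unfolding d_def by (auto simp: abs_mult)
  from ortho0[OF assms(1) this] have "(\<Sum>k<N. cis (2 * pi * real k * of_int d / real N)) = 0" .
  moreover have "(\<Sum>k<N. cis (of_int e * 2 * pi * real k * of_int (int n - int m) / real N))
     = (\<Sum>k<N. cis (2 * pi * real k * of_int d / real N))"
    by (intro sum.cong refl arg_cong[where f=cis]) (simp only: d_def of_int_mult mult_ac)
  ultimately show ?thesis using False by simp
qed

definition Kf :: "nat \<Rightarrow> int \<Rightarrow> nat \<times> nat \<Rightarrow> nat \<times> nat \<Rightarrow> complex" where
  "Kf N e k n = cis (of_int e * 2 * pi * real (fst k * fst n + snd k * snd n) / real N)"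

abbreviation II :: "nat \<Rightarrow> (nat \<times> nat) set" where "II N \<equiv> {..<N} \<times> {..<N}"

lemma Kf_split:
  "Kf N e k n * cnj (Kf N e k m) =
     cis (of_int e * 2 * pi * real (fst k) * of_int (int (fst n) - int (fst m)) / real N) *
     cis (of_int e * 2 * pi * real (snd k) * of_int (int (snd n) - int (snd m)) / real N)"
proof -
  have "of_int e * 2 * pi * real (fst k * fst n + snd k * snd n) / real N +
        - (of_int e * 2 * pi * real (fst k * fst m + snd k * snd m) / real N)
      = of_int e * 2 * pi * real (fst k) * of_int (int (fst n) - int (fst m)) / real N +
        of_int e * 2 * pi * real (snd k) * of_int (int (snd n) - int (snd m)) / real N"
    by (simp add: add_divide_distrib[symmetric] diff_divide_distrib[symmetric] algebra_simps)
  then show ?thesis unfolding Kf_def cis_cnj cis_mult by simp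
qed

lemma ortho2:
  assumes "N > 0" "e = 1 \<or> e = -1" "n \<in> II N" "m \<in> II N"
  shows "(\<Sum>k\<in>II N. Kf N e k n * cnj (Kf N e k m)) = (if n = m then of_nat (N^2) else 0)"
proof -
  have "(\<Sum>k\<in>II N. Kf N e k n * cnj (Kf N e k m)) =
    (\<Sum>k1<N. \<Sum>k2<N. cis (of_int e * 2 * pi * real k1 * of_int (int (fst n) - int (fst m)) / real N) *
     cis (of_int e * 2 * pi * real k2 * of_int (int (snd n) - int (snd m)) / real N))"
    unfolding Kf_split sum.cartesian_product by (simp add: case_prod_beta)
  also have "\<dots> = (\<Sum>k1<N. cis (of_int e * 2 * pi * real k1 * of_int (int (fst n) - int (fst m)) / real N)) *
     (\<Sum>k2<N. cis (of_int e * 2 * pi * real k2 * of_int (int (snd n) - int (snd m)) / real N))"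
    by (simp add: sum_product)
  also have "\<dots> = (if n = m then of_nat (N^2) else 0)"
  proof -
    have A: "(\<Sum>k1<N. cis (of_int e * 2 * pi * real k1 * of_int (int (fst n) - int (fst m)) / real N))
       = (if fst n = fst m then of_nat N else 0)" using assms by (intro ortho_e) auto
    have B: "(\<Sum>k1<N. cis (of_int e * 2 * pi * real k1 * of_int (int (snd n) - int (snd m)) / real N))
       = (if snd n = snd m then of_nat N else 0)" using assms by (intro ortho_e) auto
    show ?thesis unfolding A B by (simp add: prod_eq_iff power2_eq_square)
  qed
  finally show ?thesis .
qed

lemma norm_sq_c: "(complex_of_real (cmod z))^2 = z * cnj z"
  using complex_norm_square[of z] by simp

lemma parseval:
  assumes "N > 0" "e = 1 \<or> e = -1"
  shows "(\<Sum>k\<in>II N. (cmod (\<Sum>n\<in>II N. u n * Kf N e k n))^2) = real (N^2) * (\<Sum>n\<in>II N. (cmod (u n))^2)"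
proof -
  have "complex_of_real (\<Sum>k\<in>II N. (cmod (\<Sum>n\<in>II N. u n * Kf N e k n))^2)
     = (\<Sum>k\<in>II N. (\<Sum>n\<in>II N. u n * Kf N e k n) * cnj (\<Sum>m\<in>II N. u m * Kf N e k m))"
    by (simp add: norm_sq_c)
  also have "\<dots> = (\<Sum>k\<in>II N. \<Sum>n\<in>II N. \<Sum>m\<in>II N. (u n * cnj (u m)) * (Kf N e k n * cnj (Kf N e k m)))"
    by (simp add: cnj_sum sum_product algebra_simps)
  also have "\<dots> = (\<Sum>n\<in>II N. \<Sum>m\<in>II N. (u n * cnj (u m)) * (\<Sum>k\<in>II N. Kf N e k n * cnj (Kf N e k m)))"
  proof -
    have "(\<Sum>k\<in>II N. \<Sum>n\<in>II N. \<Sum>m\<in>II N. (u n * cnj (u m)) * (Kf N e k n * cnj (Kf N e k m)))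
       = (\<Sum>n\<in>II N. \<Sum>k\<in>II N. \<Sum>m\<in>II N. (u n * cnj (u m)) * (Kf N e k n * cnj (Kf N e k m)))"
      by (rule sum.swap)
    also have "\<dots> = (\<Sum>n\<in>II N. \<Sum>m\<in>II N. \<Sum>k\<in>II N. (u n * cnj (u m)) * (Kf N e k n * cnj (Kf N e k m)))"
      by (rule sum.cong[OF refl]) (rule sum.swap)
    finally show ?thesis by (simp only: sum_distrib_left)
  qed
  also have "\<dots> = (\<Sum>n\<in>II N. \<Sum>m\<in>II N. (u n * cnj (u m)) * (if n = m then of_nat (N^2) else 0))"
    using ortho2[OF assms] by (intro sum.cong refl) simp
  also have "\<dots> = (\<Sum>n\<in>II N. (u n * cnj (u n)) * of_nat (N^2))"
    by (simp add: if_distrib sum.delta cong: if_cong)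
  also have "\<dots> = complex_of_real (real (N^2) * (\<Sum>n\<in>II N. (cmod (u n))^2))"
    by (simp add: norm_sq_c sum_distrib_left mult_ac)
  finally show ?thesis by (simp only: of_real_eq_iff)
qed

lemma dft2_Kf: "dft2 N x k = (\<Sum>n\<in>II N. x n * Kf N (-1) k n)"
  unfolding dft2_def Kf_def sum.cartesian_product
  by (cases k) (simp add: case_prod_beta)

lemma Kf_sym: "Kf N e k n = Kf N e n k"
  unfolding Kf_def by (simp add: mult.commute)

lemma idft2_Kf: "idft2 N y n = (1 / of_nat (N^2)) * (\<Sum>k\<in>II N. y k * Kf N 1 n k)"
  unfolding idft2_def sum.cartesian_product
  by (cases n) (simp add: case_prod_beta Kf_def mult.commute)

lemma dft2_energy:
  assumes "N > 0"
  shows "(\<Sum>k\<in>II N. (cmod (dft2 N x k))^2) = real (N^2) * (\<Sum>n\<in>II N. (cmod (x n))^2)"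
  unfolding dft2_Kf by (rule parseval[OF assms]) simp

lemma idft2_energy:
  assumes "N > 0"
  shows "(\<Sum>n\<in>II N. (cmod (idft2 N y n))^2) = (\<Sum>k\<in>II N. (cmod (y k))^2) / real (N^2)"
proof -
  have "(\<Sum>n\<in>II N. (cmod (idft2 N y n))^2)
      = (\<Sum>n\<in>II N. (cmod (\<Sum>k\<in>II N. y k * Kf N 1 n k))^2) / (real (N^2))^2"
    unfolding idft2_Kf norm_mult
    by (simp add: sum_divide_distrib power_mult_distrib power_divide norm_divide norm_power)
  also have "\<dots> = real (N^2) * (\<Sum>k\<in>II N. (cmod (y k))^2) / (real (N^2))^2"
    by (subst parseval[OF assms]) simp_all
  also have "\<dots> = (\<Sum>k\<in>II N. (cmod (y k))^2) / real (N^2)"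
    using assms by (simp add: power2_eq_square)
  finally show ?thesis .
qed

lemma dft2_diff: "dft2 N x k - dft2 N x' k = dft2 N (\<lambda>p. x p - x' p) k"
  unfolding dft2_Kf by (simp add: sum_subtractf left_diff_distrib)

lemma idft2_diff: "idft2 N x k - idft2 N x' k = idft2 N (\<lambda>p. x p - x' p) k"
  unfolding idft2_Kf by (simp add: sum_subtractf left_diff_distrib right_diff_distrib)

definition refl2 :: "nat \<Rightarrow> nat \<times> nat \<Rightarrow> nat \<times> nat" where
  "refl2 N n = ((N - fst n) mod N, (N - snd n) mod N)"

lemma mod_refl1: "(a::nat) < N \<Longrightarrow> (N - a) mod N = (if a = 0 then 0 else N - a)"
  by (cases "a = 0") auto

lemma refl2_in: "N > 0 \<Longrightarrow> refl2 N n \<in> II N"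
  unfolding refl2_def by auto

lemma refl1_refl1: "(a::nat) < N \<Longrightarrow> (N - (N - a) mod N) mod N = a"
proof (cases "a = 0")
  case True then show ?thesis by simp
next
  case False
  assume "a < N"
  then have "(N - a) mod N = N - a" using False by (intro mod_less) auto
  then show ?thesis using \<open>a < N\<close> by simp
qed

lemma refl2_refl2: "n \<in> II N \<Longrightarrow> refl2 N (refl2 N n) = n"
  unfolding refl2_def by (cases n) (auto simp: refl1_refl1)

lemma Kf_int: "Kf N e k n = cis (2 * pi * of_int (e * int (fst k * fst n + snd k * snd n)) / real N)"
  unfolding Kf_def by (rule arg_cong[where f=cis]) (simp only: of_int_mult of_int_of_nat_eq mult_ac)

lemma Kf_refl2:
  assumes "N > 0" "n \<in> II N"
  shows "Kf N e k (refl2 N n) = cnj (Kf N e k n)"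
proof -
  obtain a b where n: "n = (a, b)" "a < N" "b < N" using assms(2) by auto
  obtain k1 k2 where k: "k = (k1, k2)" by (cases k)
  define q where "q = (if a = 0 then 0 else int k1) + (if b = 0 then 0 else int k2)"
  have "e * int (k1 * ((N - a) mod N) + k2 * ((N - b) mod N)) = (- e) * int (k1 * a + k2 * b) + int N * (e * q)"
    using n unfolding q_def by (auto simp: mod_refl1 of_nat_diff algebra_simps)
  note eq = this
  have "Kf N e k (refl2 N n) = cis (2 * pi * of_int (e * int (k1 * ((N - a) mod N) + k2 * ((N - b) mod N))) / real N)"
    by (simp only: Kf_int refl2_def n k fst_conv snd_conv)
  also have "\<dots> = cis (2 * pi * of_int ((- e) * int (k1 * a + k2 * b)) / real N)"
    by (rule cis_period[OF assms(1) eq])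
  also have "\<dots> = Kf N (-e) k n"
    by (simp only: Kf_int n k fst_conv snd_conv)
  finally have "Kf N e k (refl2 N n) = Kf N (-e) k n" .
  also have "\<dots> = cnj (Kf N e k n)" unfolding Kf_def cis_cnj by simp
  finally show ?thesis .
qed

lemma supp_closed:
  assumes "M < N" "p \<in> support_region N M"
  shows "refl2 N p \<in> support_region N M"
  using assms unfolding support_region_def refl2_def
  by (auto simp: refl1_refl1)

lemma supp_refl:
  assumes "M < N" "n \<in> II N"
  shows "refl2 N n \<in> support_region N M \<longleftrightarrow> n \<in> support_region N M"
  using supp_closed[OF assms(1), of n] supp_closed[OF assms(1), of "refl2 N n"] refl2_refl2[OF assms(2)]
  by auto

lemma real_cnj: "Im z = 0 \<Longrightarrow> cnj z = z"
  by (simp add: complex_eq_iff)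

lemma idft_real_sym:
  assumes "N > 0" "\<And>k. Im (y k) = 0" "n \<in> II N"
  shows "idft2 N y (refl2 N n) = cnj (idft2 N y n)"
proof -
  have "idft2 N y (refl2 N n) = (1 / of_nat (N^2)) * (\<Sum>k\<in>II N. y k * Kf N 1 k (refl2 N n))"
    unfolding idft2_Kf by (simp add: Kf_sym)
  also have "\<dots> = (1 / of_nat (N^2)) * (\<Sum>k\<in>II N. cnj (y k) * cnj (Kf N 1 k n))"
    using Kf_refl2[OF assms(1,3)] real_cnj[OF assms(2)] by simp
  also have "\<dots> = cnj (idft2 N y n)"
    unfolding idft2_Kf by (simp add: cnj_sum Kf_sym)
  finally show ?thesis .
qed

lemma clip_lip: "\<bar>max 0 (min 255 a) - max 0 (min 255 b)\<bar> \<le> \<bar>(a::real) - b\<bar>"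
  by (auto simp: max_def min_def)

lemma cmod_clip: "cmod (clip255 z) \<le> 255"
  unfolding clip255_def by (simp add: max_def min_def)

lemma P_op_props:
  assumes "N > 0" "M < N" "\<And>k. Im (y k) = 0" "k \<in> II N"
  shows "Im (P_op N M y k) = 0" "cmod (P_op N M y k) \<le> 255 * real (N^2)"
proof -
  define x where "x = idft2 N y"
  define c where "c = (\<lambda>p. clip255 (proj_supp N M x p))"
  have P: "P_op N M y = dft2 N c" unfolding P_op_def c_def x_def ..
  have creal: "cnj (c p) = c p" for p unfolding c_def clip255_def by simp
  have csym: "c (refl2 N n) = c n" if "n \<in> II N" for n
  proof -
    have "Re (x (refl2 N n)) = Re (x n)" unfolding x_def using idft_real_sym[OF assms(1,3) that] by simp
    then show ?thesis unfolding c_def proj_supp_def clip255_def using supp_refl[OF assms(2) that] by simp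
  qed
  have "cnj (dft2 N c k) = (\<Sum>n\<in>II N. c n * cnj (Kf N (-1) k n))"
    unfolding dft2_Kf by (simp add: cnj_sum creal)
  also have "\<dots> = (\<Sum>n\<in>II N. c (refl2 N n) * Kf N (-1) k (refl2 N n))"
    using Kf_refl2[OF assms(1)] csym by (intro sum.cong refl) simp
  also have "\<dots> = (\<Sum>n\<in>II N. c n * Kf N (-1) k n)"
    by (rule sum.reindex_bij_witness[where i="refl2 N" and j="refl2 N"])
       (auto simp: refl2_refl2 refl2_in[OF assms(1)])
  also have "\<dots> = dft2 N c k" unfolding dft2_Kf ..
  finally have "cnj (dft2 N c k) = dft2 N c k" .
  then have "Im (cnj (dft2 N c k)) = Im (dft2 N c k)" by (rule arg_cong)
  then have "Im (dft2 N c k) = 0" by simp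
  then show "Im (P_op N M y k) = 0" unfolding P .
  have "cmod (dft2 N c k) \<le> (\<Sum>n\<in>II N. cmod (c n * Kf N (-1) k n))"
    unfolding dft2_Kf by (rule norm_sum)
  also have "\<dots> \<le> (\<Sum>n\<in>II N. 255)"
    by (intro sum_mono) (simp add: norm_mult Kf_def c_def cmod_clip)
  also have "\<dots> = 255 * real (N^2)" by (simp add: power2_eq_square)
  finally show "cmod (P_op N M y k) \<le> 255 * real (N^2)" unfolding P .
qed

lemma P_op_lip:
  assumes "N > 0"
  shows "(\<Sum>k\<in>II N. (cmod (P_op N M y k - P_op N M y' k))^2) \<le> (\<Sum>k\<in>II N. (cmod (y k - y' k))^2)"
proof -
  define x where "x = idft2 N y"
  define x' where "x' = idft2 N y'"
  have "(\<Sum>k\<in>II N. (cmod (P_op N M y k - P_op N M y' k))^2)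
     = real (N^2) * (\<Sum>n\<in>II N. (cmod (clip255 (proj_supp N M x n) - clip255 (proj_supp N M x' n)))^2)"
    unfolding P_op_def dft2_diff x_def x'_def by (rule dft2_energy[OF assms])
  also have "\<dots> \<le> real (N^2) * (\<Sum>n\<in>II N. (cmod (x n - x' n))^2)"
  proof (intro mult_left_mono sum_mono power_mono)
    fix n
    show "cmod (clip255 (proj_supp N M x n) - clip255 (proj_supp N M x' n)) \<le> cmod (x n - x' n)"
    proof (cases "n \<in> support_region N M")
      case True
      have "\<bar>max 0 (min 255 (Re (x n))) - max 0 (min 255 (Re (x' n)))\<bar> \<le> \<bar>Re (x n - x' n)\<bar>"
        using clip_lip by simp
      also have "\<dots> \<le> cmod (x n - x' n)" by (rule abs_Re_le_cmod)
      finally show ?thesis using True unfolding proj_supp_def clip255_def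
        by (simp flip: of_real_diff)
    next
      case False then show ?thesis unfolding proj_supp_def clip255_def by simp
    qed
  qed simp_all
  also have "\<dots> = real (N^2) * ((\<Sum>k\<in>II N. (cmod (y k - y' k))^2) / real (N^2))"
    unfolding x_def x'_def idft2_diff by (subst idft2_energy[OF assms]) rule
  also have "\<dots> = (\<Sum>k\<in>II N. (cmod (y k - y' k))^2)" using assms by simp
  finally show ?thesis .
qed



abbreviation nd :: "real \<Rightarrow> real \<Rightarrow> real" where "nd \<sigma> \<equiv> normal_density 0 \<sigma>"

lemma nd_mono:
  assumes "0 < \<sigma>" "\<bar>x\<bar> \<le> \<bar>y\<bar>"
  shows "nd \<sigma> y \<le> nd \<sigma> x"
proof -
  have "x^2 \<le> y^2" using assms(2) by (simp add: abs_le_square_iff)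
  then have "-(y^2) / (2 * \<sigma>^2) \<le> -(x^2) / (2 * \<sigma>^2)" using assms(1)
    by (intro divide_right_mono) auto
  then show ?thesis unfolding normal_density_def by (intro mult_left_mono) auto
qed

lemma pdf_integrable:
  assumes "prob_space \<mu>" "sets \<mu> = sets borel" "0 < \<sigma>"
  shows "integrable \<mu> (\<lambda>w. nd \<sigma> (u - w))"
proof -
  interpret prob_space \<mu> by fact
  show ?thesis
  proof (rule integrable_const_bound[where B="nd \<sigma> 0"])
    show "AE x in \<mu>. norm (nd \<sigma> (u - x)) \<le> nd \<sigma> 0" using nd_mono[OF assms(3)] by simp
    show "(\<lambda>w. nd \<sigma> (u - w)) \<in> borel_measurable \<mu>"
      by (subst measurable_cong_sets[OF assms(2) refl]) simp
  qed
qed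

lemma pdf_nn:
  assumes "prob_space \<mu>" "sets \<mu> = sets borel" "0 < \<sigma>"
  shows "(\<integral>\<^sup>+w. ennreal (nd \<sigma> (u - w)) \<partial>\<mu>) = ennreal (noise_pdf \<mu> \<sigma> u)"
  unfolding noise_pdf_def
  by (rule nn_integral_eq_integral[OF pdf_integrable[OF assms]]) simp

lemma pdf_nonneg: "0 \<le> noise_pdf \<mu> \<sigma> u"
  unfolding noise_pdf_def by (rule Bochner_Integration.integral_nonneg) simp

lemma pdf_bound:
  assumes "prob_space \<mu>" "sets \<mu> = sets borel" "0 < \<sigma>"
  shows "noise_pdf \<mu> \<sigma> u \<le> nd \<sigma> 0"
proof -
  interpret prob_space \<mu> by fact
  have "noise_pdf \<mu> \<sigma> u \<le> (\<integral>w. nd \<sigma> 0 \<partial>\<mu>)"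
    unfolding noise_pdf_def
    by (rule integral_mono[OF pdf_integrable[OF assms]]) (auto intro: nd_mono[OF assms(3)])
  then show ?thesis by (simp add: prob_space)
qed

lemma pdf_le_fmax:
  assumes "prob_space \<mu>" "sets \<mu> = sets borel" "0 < \<sigma>" "u \<in> sig_range N"
  shows "noise_pdf \<mu> \<sigma> u \<le> f_max \<mu> \<sigma> N"
  unfolding f_max_def
  by (rule cSUP_upper[OF assms(4)]) (intro bdd_aboveI2[where M="nd \<sigma> 0"] pdf_bound[OF assms(1-3)])

lemma pdf_lower:
  assumes "prob_space \<mu>" "sets \<mu> = sets borel" "0 < \<sigma>"
  shows "\<exists>c>0. \<forall>u. \<bar>u\<bar> \<le> K \<longrightarrow> c \<le> noise_pdf \<mu> \<sigma> u"
proof -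
  interpret prob_space \<mu> by fact
  have sp: "space \<mu> = UNIV" using sets_eq_imp_space_eq[OF assms(2)] by simp
  have "\<exists>n::nat. emeasure \<mu> {- real n .. real n} \<noteq> 0"
  proof (rule ccontr)
    assume "\<not> ?thesis"
    then have "\<And>n::nat. {- real n .. real n} \<in> null_sets \<mu>"
      using assms(2) by (auto simp: null_sets_def)
    then have "(\<Union>n::nat. {- real n .. real n}) \<in> null_sets \<mu>" by (rule null_sets_UN)
    moreover have "(\<Union>n::nat. {- real n .. real n}) = UNIV"
    proof safe
      fix x :: real
      obtain n :: nat where "\<bar>x\<bar> \<le> real n" using real_arch_simple by blast
      then show "x \<in> (\<Union>n::nat. {- real n .. real n})" by (intro UN_I[of n]) auto
    qed simp
    ultimately have "emeasure \<mu> (space \<mu>) = 0" using sp by auto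
    then show False by (simp add: emeasure_space_1)
  qed
  then obtain n :: nat where n: "emeasure \<mu> {- real n .. real n} \<noteq> 0" by blast
  define A where "A = {- real n .. real n}"
  have As: "A \<in> sets \<mu>" unfolding A_def using assms(2) by simp
  define c where "c = nd \<sigma> (\<bar>K\<bar> + real n) * measure \<mu> A"
  have "measure \<mu> A > 0" using n As unfolding A_def
    by (metis emeasure_eq_measure ennreal_0 measure_nonneg order_le_less A_def)
  then have cpos: "c > 0" unfolding c_def using normal_density_pos[OF assms(3)] by simp
  have "c \<le> noise_pdf \<mu> \<sigma> u" if "\<bar>u\<bar> \<le> K" for u
  proof -
    have "ennreal c = (\<integral>\<^sup>+w. ennreal (nd \<sigma> (\<bar>K\<bar> + real n)) * indicator A w \<partial>\<mu>)"
      using As unfolding c_def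
      by (simp add: nn_integral_cmult_indicator emeasure_eq_measure ennreal_mult)
    also have "\<dots> \<le> (\<integral>\<^sup>+w. ennreal (nd \<sigma> (u - w)) \<partial>\<mu>)"
    proof (intro nn_integral_mono)
      fix w
      show "ennreal (nd \<sigma> (\<bar>K\<bar> + real n)) * indicator A w \<le> ennreal (nd \<sigma> (u - w))"
      proof (cases "w \<in> A")
        case True
        then have "\<bar>u - w\<bar> \<le> \<bar>\<bar>K\<bar> + real n\<bar>" using that unfolding A_def by auto
        then show ?thesis using True nd_mono[OF assms(3)] by (simp add: ennreal_leI)
      qed simp
    qed
    also have "\<dots> = ennreal (noise_pdf \<mu> \<sigma> u)" by (rule pdf_nn[OF assms])
    finally show ?thesis using pdf_nonneg by (simp add: ennreal_le_iff)
  qed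
  then show ?thesis using cpos by blast
qed

lemma cdf_diff:
  assumes "prob_space \<mu>" "sets \<mu> = sets borel" "0 < \<sigma>" "t \<le> s"
  shows "ennreal (noise_cdf \<mu> \<sigma> s - noise_cdf \<mu> \<sigma> t)
     = (\<integral>\<^sup>+u. ennreal (noise_pdf \<mu> \<sigma> u) * indicator {t<..s} u \<partial>lborel)"
proof -
  interpret M: prob_space \<mu> by fact
  define G where "G = density lborel (nd \<sigma>)"
  have sG: "sets G = sets borel" unfolding G_def by simp
  interpret G: prob_space G unfolding G_def by (rule prob_space_normal_density[OF assms(3)])
  interpret P: pair_prob_space \<mu> G by unfold_locales
  define \<nu> where "\<nu> = \<mu> \<Otimes>\<^sub>M G"
  have sn: "sets \<nu> = sets (borel \<Otimes>\<^sub>M borel)" unfolding \<nu>_def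
    by (rule sets_pair_measure_cong[OF assms(2) sG])
  have spn: "space \<nu> = UNIV" using sets_eq_imp_space_eq[OF sn] by (simp add: space_pair_measure)
  interpret V: prob_space \<nu> unfolding \<nu>_def by (rule P.prob_space_axioms)
  define f where "f = (\<lambda>(w::real, e::real). w + e)"
  have fm: "f \<in> \<nu> \<rightarrow>\<^sub>M borel" unfolding f_def
    by (subst measurable_cong_sets[OF sn refl]) simp
  define D where "D = distr \<nu> borel f"
  interpret D: prob_space D unfolding D_def by (rule V.prob_space_distr[OF fm])
  have cdf: "noise_cdf \<mu> \<sigma> x = measure D {..x}" for x
    unfolding noise_cdf_def D_def \<nu>_def G_def f_def ..
  have "noise_cdf \<mu> \<sigma> s - noise_cdf \<mu> \<sigma> t = measure D ({..s} - {..t})"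
    unfolding cdf using assms(4) by (subst D.finite_measure_Diff) (auto simp: D_def)
  also have "{..s} - {..t} = {t<..s}" by auto
  also have "measure D {t<..s} = measure \<nu> (f -` {t<..s} \<inter> space \<nu>)"
    unfolding D_def by (rule measure_distr[OF fm]) simp
  finally have "ennreal (noise_cdf \<mu> \<sigma> s - noise_cdf \<mu> \<sigma> t) = emeasure \<nu> (f -` {t<..s} \<inter> space \<nu>)"
    by (simp add: V.emeasure_eq_measure)
  also have "\<dots> = (\<integral>\<^sup>+w. emeasure G (Pair w -` (f -` {t<..s} \<inter> space \<nu>)) \<partial>\<mu>)"
    unfolding \<nu>_def
    by (rule G.emeasure_pair_measure_alt) (use fm in \<open>auto simp: \<nu>_def\<close>)
  also have "\<dots> = (\<integral>\<^sup>+w. (\<integral>\<^sup>+u. ennreal (nd \<sigma> (u - w)) * indicator {t<..s} u \<partial>lborel) \<partial>\<mu>)"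
  proof (rule nn_integral_cong)
    fix w
    have "Pair w -` (f -` {t<..s} \<inter> space \<nu>) = {t - w<..s - w}"
      unfolding spn f_def by auto
    then have "emeasure G (Pair w -` (f -` {t<..s} \<inter> space \<nu>))
        = (\<integral>\<^sup>+e. ennreal (nd \<sigma> e) * indicator {t - w<..s - w} e \<partial>lborel)"
      unfolding G_def by (simp add: emeasure_density)
    also have "\<dots> = (\<integral>\<^sup>+u. ennreal (nd \<sigma> (- w + 1 * u)) * indicator {t - w<..s - w} (- w + 1 * u) \<partial>lborel)"
      using nn_integral_real_affine[of "\<lambda>e. ennreal (nd \<sigma> e) * indicator {t - w<..s - w} e" 1 "- w"]
      by simp
    also have "\<dots> = (\<integral>\<^sup>+u. ennreal (nd \<sigma> (u - w)) * indicator {t<..s} u \<partial>lborel)"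
      by (intro nn_integral_cong) (auto simp: indicator_def)
    finally show "emeasure G (Pair w -` (f -` {t<..s} \<inter> space \<nu>))
        = (\<integral>\<^sup>+u. ennreal (nd \<sigma> (u - w)) * indicator {t<..s} u \<partial>lborel)" .
  qed
  also have "\<dots> = (\<integral>\<^sup>+u. (\<integral>\<^sup>+w. ennreal (nd \<sigma> (u - w)) * indicator {t<..s} u \<partial>\<mu>) \<partial>lborel)"
  proof -
    interpret Q: pair_sigma_finite \<mu> lborel by unfold_locales
    have "(\<lambda>(w, u). ennreal (nd \<sigma> (u - w)) * indicator {t<..s} u) \<in> borel_measurable (\<mu> \<Otimes>\<^sub>M lborel)"
      by (subst measurable_cong_sets[OF sets_pair_measure_cong[OF assms(2) sets_lborel] refl]) simp
    then show ?thesis by (rule Q.Fubini'[symmetric])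
  qed
  also have "\<dots> = (\<integral>\<^sup>+u. ennreal (noise_pdf \<mu> \<sigma> u) * indicator {t<..s} u \<partial>lborel)"
  proof (rule nn_integral_cong)
    fix u
    have "(\<integral>\<^sup>+w. ennreal (nd \<sigma> (u - w)) * indicator {t<..s} u \<partial>\<mu>)
       = (\<integral>\<^sup>+w. ennreal (nd \<sigma> (u - w)) \<partial>\<mu>) * indicator {t<..s} u"
      by (rule nn_integral_multc) (subst measurable_cong_sets[OF assms(2) refl], simp)
    then show "(\<integral>\<^sup>+w. ennreal (nd \<sigma> (u - w)) * indicator {t<..s} u \<partial>\<mu>)
       = ennreal (noise_pdf \<mu> \<sigma> u) * indicator {t<..s} u" by (simp add: pdf_nn[OF assms(1-3)])
  qed
  finally show ?thesis .
qed



lemma slope_bounds: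
  assumes "prob_space \<mu>" "sets \<mu> = sets borel" "0 < \<sigma>" "t \<le> s"
    "t \<in> sig_range N" "s \<in> sig_range N" "\<And>u. u \<in> sig_range N \<Longrightarrow> c \<le> noise_pdf \<mu> \<sigma> u" "0 < c"
  shows "c * (s - t) \<le> noise_cdf \<mu> \<sigma> s - noise_cdf \<mu> \<sigma> t"
    "noise_cdf \<mu> \<sigma> s - noise_cdf \<mu> \<sigma> t \<le> f_max \<mu> \<sigma> N * (s - t)"
proof -
  have sub: "{t<..s} \<subseteq> sig_range N" using assms(5,6) unfolding sig_range_def by auto
  have fm0: "0 \<le> f_max \<mu> \<sigma> N" using pdf_le_fmax[OF assms(1-3,5)] pdf_nonneg[of \<mu> \<sigma> t] by linarith
  note cd = cdf_diff[OF assms(1-4)]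
  have "ennreal (noise_cdf \<mu> \<sigma> s - noise_cdf \<mu> \<sigma> t) \<le> (\<integral>\<^sup>+u. ennreal (f_max \<mu> \<sigma> N) * indicator {t<..s} u \<partial>lborel)"
    unfolding cd
  proof (intro nn_integral_mono)
    fix u show "ennreal (noise_pdf \<mu> \<sigma> u) * indicator {t<..s} u \<le> ennreal (f_max \<mu> \<sigma> N) * indicator {t<..s} u"
      using pdf_le_fmax[OF assms(1-3)] sub by (auto simp: indicator_def ennreal_leI)
  qed
  also have "\<dots> = ennreal (f_max \<mu> \<sigma> N * (s - t))"
    using assms(4) fm0 by (simp add: nn_integral_cmult_indicator ennreal_mult)
  finally show "noise_cdf \<mu> \<sigma> s - noise_cdf \<mu> \<sigma> t \<le> f_max \<mu> \<sigma> N * (s - t)"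
    using assms(4) fm0 by (simp add: ennreal_le_iff)
  have "ennreal (c * (s - t)) = (\<integral>\<^sup>+u. ennreal c * indicator {t<..s} u \<partial>lborel)"
    using assms(4,8) by (simp add: nn_integral_cmult_indicator ennreal_mult)
  also have "\<dots> \<le> ennreal (noise_cdf \<mu> \<sigma> s - noise_cdf \<mu> \<sigma> t)"
    unfolding cd
  proof (intro nn_integral_mono)
    fix u show "ennreal c * indicator {t<..s} u \<le> ennreal (noise_pdf \<mu> \<sigma> u) * indicator {t<..s} u"
      using assms(7) sub by (auto simp: indicator_def ennreal_leI)
  qed
  finally have le: "ennreal (c * (s - t)) \<le> ennreal (noise_cdf \<mu> \<sigma> s - noise_cdf \<mu> \<sigma> t)" .
  show "c * (s - t) \<le> noise_cdf \<mu> \<sigma> s - noise_cdf \<mu> \<sigma> t"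
  proof (cases "t = s")
    case True then show ?thesis by simp
  next
    case False
    then have "0 < c * (s - t)" using assms(4,8) by simp
    then have "0 < ennreal (noise_cdf \<mu> \<sigma> s - noise_cdf \<mu> \<sigma> t)" using le
      by (metis ennreal_less_zero_iff order_less_le_trans)
    then have "0 \<le> noise_cdf \<mu> \<sigma> s - noise_cdf \<mu> \<sigma> t" by (simp add: ennreal_less_zero_iff)
    then show ?thesis using le by (simp add: ennreal_le_iff)
  qed
qed

lemma phi_lip_aux:
  fixes d D g c fm :: real
  assumes "0 \<le> d" "c * d \<le> D" "D \<le> fm * d" "0 < g"
  shows "\<bar>d - g * D\<bar> \<le> max (1 - g * c) (g * fm - 1) * d"
proof -
  have "g * (c * d) \<le> g * D" using assms by (intro mult_left_mono) auto
  moreover have "g * D \<le> g * (fm * d)" using assms by (intro mult_left_mono) auto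
  moreover have "(1 - g * c) * d \<le> max (1 - g * c) (g * fm - 1) * d" using assms(1) by (intro mult_right_mono) auto
  moreover have "(g * fm - 1) * d \<le> max (1 - g * c) (g * fm - 1) * d" using assms(1) by (intro mult_right_mono) auto
  ultimately show ?thesis by (auto simp: algebra_simps abs_le_iff)
qed

lemma frob_II: "frob_dist N A B = sqrt (\<Sum>p\<in>II N. (cmod (A p - B p))^2)"
  unfolding frob_dist_def sum.cartesian_product by (simp add: case_prod_beta)

theorem lemma3:
  fixes M N :: nat and g W d :: rmat and \<mu> :: "real measure" and \<sigma> \<gamma> :: real
  assumes "0 < M" and "2 * M < N"
    and "\<And>i j. i < M \<Longrightarrow> j < M \<Longrightarrow> g (i, j) \<in> {0..255}"
    and "prob_space \<mu>" and "sets \<mu> = sets borel"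
    and "distr \<mu> borel uminus = \<mu>"
    and "integrable \<mu> (\<lambda>x. x)" and "(\<integral>x. x \<partial>\<mu>) = 0"
    and "0 < \<sigma>"
    and "0 < \<gamma>" and "\<gamma> < 2 / f_max \<mu> \<sigma> N"
  shows "is_contraction_on N (real_S_mats N) (T_op N M \<mu> \<sigma> \<gamma> (Xr N M g W d))"
proof -
  have N0: "N > 0" and MN: "M < N" using assms(1,2) by auto
  note mu = assms(4,5,9)
  define X where "X = Xr N M g W d"
  define F where "F = noise_cdf \<mu> \<sigma>"
  define fm where "fm = f_max \<mu> \<sigma> N"
  define y where "y = (\<lambda>h p. complex_of_real (\<gamma> * X p + Re (h p) - \<gamma> * (F (Re (h p)) - 1/2)))"
  have T: "T_op N M \<mu> \<sigma> \<gamma> X h = P_op N M (y h)" for h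
    unfolding T_op_def y_def F_def ..
  have yIm: "Im (y h p) = 0" for h p unfolding y_def by simp
  obtain c where c: "c > 0" "\<And>u. \<bar>u\<bar> \<le> 255 * real (N^2) \<Longrightarrow> c \<le> noise_pdf \<mu> \<sigma> u"
    using pdf_lower[OF mu, of "255 * real (N^2)"] by blast
  have cS: "c \<le> noise_pdf \<mu> \<sigma> u" if "u \<in> sig_range N" for u
    using c(2) that unfolding sig_range_def by auto
  have S0: "0 \<in> sig_range N" unfolding sig_range_def by simp
  have cfm: "c \<le> fm" using cS[OF S0] pdf_le_fmax[OF mu S0] unfolding fm_def by linarith
  have fmpos: "fm > 0" using cfm c(1) by linarith
  have gfm: "\<gamma> * fm < 2" using assms(11) fmpos unfolding fm_def[symmetric] by (simp add: field_simps)
  define L where "L = max (1 - \<gamma> * c) (\<gamma> * fm - 1)"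
  have L0: "0 \<le> L" unfolding L_def using cfm assms(10)
    by (smt (verit) mult_left_mono)
  have L1: "L < 1" unfolding L_def using gfm c(1) assms(10) by (simp add: max_def)
  have philip: "\<bar>(a - \<gamma> * F a) - (b - \<gamma> * F b)\<bar> \<le> L * \<bar>a - b\<bar>"
    if "a \<in> sig_range N" "b \<in> sig_range N" for a b
  proof -
    have gen: "\<bar>(s - \<gamma> * F s) - (t - \<gamma> * F t)\<bar> \<le> L * \<bar>s - t\<bar>"
      if "t \<le> s" "t \<in> sig_range N" "s \<in> sig_range N" for s t
    proof -
      note sb = slope_bounds[OF mu that cS c(1)]
      have "\<bar>(s - t) - \<gamma> * (F s - F t)\<bar> \<le> L * (s - t)"
        unfolding L_def F_def using sb \<open>t \<le> s\<close> assms(10) unfolding fm_def[symmetric]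
        by (intro phi_lip_aux) auto
      then show ?thesis using \<open>t \<le> s\<close> by (simp add: algebra_simps)
    qed
    show ?thesis
    proof (cases "b \<le> a")
      case True then show ?thesis using gen that by blast
    next
      case False
      then have "\<bar>(b - \<gamma> * F b) - (a - \<gamma> * F a)\<bar> \<le> L * \<bar>b - a\<bar>" using gen that by simp
      then show ?thesis by (simp add: abs_minus_commute)
    qed
  qed
  show ?thesis
    unfolding is_contraction_on_def X_def[symmetric]
  proof (intro conjI exI[of _ L] ballI L0 L1 image_subsetI)
    fix h assume "h \<in> real_S_mats N"
    show "T_op N M \<mu> \<sigma> \<gamma> X h \<in> real_S_mats N"
      unfolding real_S_mats_def T
    proof (intro CollectI allI impI conjI)
      fix i j assume "i < N" "j < N"
      then have k: "(i, j) \<in> II N" by simp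
      show "Im (P_op N M (y h) (i, j)) = 0" by (rule P_op_props(1)[OF N0 MN yIm k])
      have "\<bar>Re (P_op N M (y h) (i, j))\<bar> \<le> 255 * real (N^2)"
        using abs_Re_le_cmod P_op_props(2)[OF N0 MN yIm k] by (rule order_trans)
      then show "Re (P_op N M (y h) (i, j)) \<in> sig_range N" unfolding sig_range_def by auto
    qed
  next
    fix a b assume a: "a \<in> real_S_mats N" and b: "b \<in> real_S_mats N"
    have pt: "(cmod (y a p - y b p))^2 \<le> L^2 * (cmod (a p - b p))^2" if pI: "p \<in> II N" for p
    proof -
      obtain i j where p: "p = (i, j)" "i < N" "j < N" using pI by (cases p) auto
      have ra: "Im (a p) = 0" "Re (a p) \<in> sig_range N" using a p unfolding real_S_mats_def by auto
      have rb: "Im (b p) = 0" "Re (b p) \<in> sig_range N" using b p unfolding real_S_mats_def by auto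
      have "y a p - y b p = complex_of_real ((Re (a p) - \<gamma> * F (Re (a p))) - (Re (b p) - \<gamma> * F (Re (b p))))"
        unfolding y_def by (simp add: algebra_simps)
      then have "cmod (y a p - y b p) = \<bar>(Re (a p) - \<gamma> * F (Re (a p))) - (Re (b p) - \<gamma> * F (Re (b p)))\<bar>"
        by (simp only: norm_of_real)
      also have "\<dots> \<le> L * \<bar>Re (a p) - Re (b p)\<bar>" by (rule philip[OF ra(2) rb(2)])
      also have "\<bar>Re (a p) - Re (b p)\<bar> = cmod (a p - b p)"
        using ra(1) rb(1) by (simp add: cmod_eq_Re)
      finally have "cmod (y a p - y b p) \<le> L * cmod (a p - b p)" .
      then have "(cmod (y a p - y b p))^2 \<le> (L * cmod (a p - b p))^2"
        by (intro power_mono) auto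
      then show ?thesis by (simp add: power_mult_distrib)
    qed
    have "frob_dist N (T_op N M \<mu> \<sigma> \<gamma> X a) (T_op N M \<mu> \<sigma> \<gamma> X b)
        \<le> sqrt (\<Sum>p\<in>II N. (cmod (y a p - y b p))^2)"
      unfolding frob_II T by (intro real_sqrt_le_mono P_op_lip[OF N0])
    also have "\<dots> \<le> sqrt (\<Sum>p\<in>II N. L^2 * (cmod (a p - b p))^2)"
      by (intro real_sqrt_le_mono sum_mono pt)
    also have "\<dots> = L * frob_dist N a b"
      unfolding frob_II sum_distrib_left[symmetric] real_sqrt_mult using L0 by simp
    finally show "frob_dist N (T_op N M \<mu> \<sigma> \<gamma> X a) (T_op N M \<mu> \<sigma> \<gamma> X b) \<le> L * frob_dist N a b" .
  qed
qed

end
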